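(* (1) If $\alpha:P\to P_0$ is an incentive strategy of the leader and $u^\natural\in\mathcal{E}(\alpha)$, then $(\alpha[u^\natural],u^\natural)\in\mathcal{B}$. (2) If $u_0^\natural\in P_0$ and $u^\natural\in P$ satisfy $(u_0^\natural,u^\natural)\in\mathcal{B}$, then there exists an incentive strategy of the leader $\alpha:P\to P_0$ such that $\alpha[u^\natural]=u_0^\natural$ and $u^\natural\in\mathcal{E}(\alpha)$.
   Context: Static game with a leader (player $0$) and followers $1,\dots,n$. Each $P_i$ ($i=0,\dots,n$) is a nonempty compact metric space and each payoff $J_i:P_0\times P_1\times\dots\times P_n\to\mathbb{R}$ ($i=0,\dots,n$) is continuous; each player maximizes. Let $P=P_1\times\dots\times P_n$; elements $u=(u_1,\dots,u_n)\in P$ are profiles of followers' strategies, and for $u_i'\in P_i$, $(u_i',u_{-i})$ denotes $u$ with the $i$-th component replaced by $u_i'$. Write $J_i(u_0,u)=J_i(u_0,u_1,\dots,u_n)$. An incentive strategy of the leader is an arbitrary map $\alpha:P\to P_0$. The set of followers' Nash equilibria against $\alpha$ is $\mathcal{E}(\alpha)=\{u\in P: J_i(\alpha[u],u)\ge J_i(\alpha[(u_i',u_{-i})],(u_i',u_{-i}))\ \text{for all } i=1,\dots,n,\ u_i'\in P_i\}$. Define $\mathcal{B}=\{(u_0,u)\in P_0\times P: J_i(u_0,u)\ge\max_{u_i'\in P_i}\min_{u_0'\in P_0}J_i(u_0',u_i',u_{-i})\ \text{for } i=1,\dots,n\}$. *)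

theory Defs
  imports "HOL-Analysis.Analysis"
begin

text \<open>All strategy spaces are carried by subsets of one metric space type 'a:
  P 0 is the leader's strategy set, P i (1 \<le> i \<le> n) the followers' sets.  J i u0 u is the payoff of player i.\<close>

definition profiles :: "nat \<Rightarrow> (nat \<Rightarrow> 'a set) \<Rightarrow> (nat \<Rightarrow> 'a) set" where
  "profiles n P = PiE {1..n} P"

definition game :: "nat \<Rightarrow> (nat \<Rightarrow> 'a::metric_space set)
    \<Rightarrow> (nat \<Rightarrow> 'a \<Rightarrow> (nat \<Rightarrow> 'a) \<Rightarrow> real) \<Rightarrow> bool" where
  "game n P J \<longleftrightarrow>
     (\<forall>i\<in>{0..n}. compact (P i) \<and> P i \<noteq> {}) \<and>
     (\<forall>i\<in>{0..n}. continuous_on (P 0 \<times> profiles n P) (\<lambda>(u0, u). J i u0 u))"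

definition incentive :: "nat \<Rightarrow> (nat \<Rightarrow> 'a set) \<Rightarrow> ((nat \<Rightarrow> 'a) \<Rightarrow> 'a) set" where
  "incentive n P = profiles n P \<rightarrow> P 0"

definition NE :: "nat \<Rightarrow> (nat \<Rightarrow> 'a set) \<Rightarrow> (nat \<Rightarrow> 'a \<Rightarrow> (nat \<Rightarrow> 'a) \<Rightarrow> real)
    \<Rightarrow> ((nat \<Rightarrow> 'a) \<Rightarrow> 'a) \<Rightarrow> (nat \<Rightarrow> 'a) set" where
  "NE n P J \<alpha> = {u \<in> profiles n P. \<forall>i\<in>{1..n}. \<forall>v\<in>P i.
       J i (\<alpha> u) u \<ge> J i (\<alpha> (u(i := v))) (u(i := v))}"

text \<open>The set B; max/min are written as SUP/INF (attained under the game assumptions).\<close>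
definition Bset :: "nat \<Rightarrow> (nat \<Rightarrow> 'a set) \<Rightarrow> (nat \<Rightarrow> 'a \<Rightarrow> (nat \<Rightarrow> 'a) \<Rightarrow> real)
    \<Rightarrow> ('a \<times> (nat \<Rightarrow> 'a)) set" where
  "Bset n P J = {(u0, u). u0 \<in> P 0 \<and> u \<in> profiles n P \<and>
     (\<forall>i\<in>{1..n}. J i u0 u \<ge> (SUP v\<in>P i. INF w\<in>P 0. J i w (u(i := v))))}"

end

theory Submission
  imports Defs
begin

lemma upd_cont: "continuous_on S (\<lambda>v. x(i := v))"
proof (intro continuous_on_coordinatewise_then_product)
  fix j show "continuous_on S (\<lambda>v. (x(i := v)) j)"
    by (cases "j = i") (auto intro: continuous_intros)
qed

lemma upd_prof: "x \<in> profiles n P \<Longrightarrow> i \<in> {1..n} \<Longrightarrow> v \<in> P i \<Longrightarrow> x(i := v) \<in> profiles n P"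
  unfolding profiles_def by (auto simp: PiE_iff extensional_def)

lemma cont_w:
  assumes "game n P J" "i \<in> {0..n}" "x \<in> profiles n P"
  shows "continuous_on (P 0) (\<lambda>w. J i w x)"
proof -
  have c: "continuous_on (P 0 \<times> profiles n P) (\<lambda>(u0, u). J i u0 u)"
    using assms unfolding game_def by auto
  have "continuous_on (P 0) ((\<lambda>(u0, u). J i u0 u) \<circ> (\<lambda>w. (w, x)))"
    by (rule continuous_on_compose[OF _ continuous_on_subset[OF c]])
       (auto intro: continuous_intros simp: assms(3))
  thus ?thesis by (simp add: o_def)
qed

lemma cont_v:
  assumes "game n P J" "i \<in> {1..n}" "x \<in> profiles n P" "u0 \<in> P 0"
  shows "continuous_on (P i) (\<lambda>v. J i u0 (x(i := v)))"
proof -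
  have c: "continuous_on (P 0 \<times> profiles n P) (\<lambda>(u0, u). J i u0 u)"
    using assms unfolding game_def by auto
  have "continuous_on (P i) ((\<lambda>(u0, u). J i u0 u) \<circ> (\<lambda>v. (u0, x(i := v))))"
    by (rule continuous_on_compose[OF _ continuous_on_subset[OF c]])
       (auto intro: continuous_intros upd_cont upd_prof assms)
  thus ?thesis by (simp add: o_def)
qed

lemma bdd_w:
  assumes "game n P J" "i \<in> {0..n}" "x \<in> profiles n P"
  shows "bdd_below ((\<lambda>w. J i w x) ` P 0)" "bdd_above ((\<lambda>w. J i w x) ` P 0)"
proof -
  have "compact ((\<lambda>w. J i w x) ` P 0)"
    using assms cont_w[OF assms] unfolding game_def
    by (intro compact_continuous_image) auto
  hence "bounded ((\<lambda>w. J i w x) ` P 0)" by (rule compact_imp_bounded)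
  thus "bdd_below ((\<lambda>w. J i w x) ` P 0)" "bdd_above ((\<lambda>w. J i w x) ` P 0)"
    by (auto intro: bounded_imp_bdd_below bounded_imp_bdd_above)
qed

lemma bdd_v:
  assumes "game n P J" "i \<in> {1..n}" "x \<in> profiles n P" "u0 \<in> P 0"
  shows "bdd_above ((\<lambda>v. J i u0 (x(i := v))) ` P i)"
proof -
  have "compact ((\<lambda>v. J i u0 (x(i := v))) ` P i)"
    using assms cont_v[OF assms] unfolding game_def
    by (intro compact_continuous_image) auto
  thus ?thesis by (auto intro: bounded_imp_bdd_above compact_imp_bounded)
qed

lemma min_ex:
  assumes "game n P J" "i \<in> {0..n}" "x \<in> profiles n P"
  shows "\<exists>w\<in>P 0. \<forall>w'\<in>P 0. J i w x \<le> J i w' x"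
  using continuous_attains_inf[OF _ _ cont_w[OF assms]] assms unfolding game_def by auto

lemma inf_le_sup:
  assumes g: "game n P J" and i: "i \<in> {1..n}" and x: "x \<in> profiles n P" and v: "v \<in> P i"
    and u0: "u0 \<in> P 0"
  shows "(INF w\<in>P 0. J i w (x(i := v))) \<le> (SUP v\<in>P i. INF w\<in>P 0. J i w (x(i := v)))"
proof (rule cSUP_upper[OF v])
  show "bdd_above ((\<lambda>v. INF w\<in>P 0. J i w (x(i := v))) ` P i)"
  proof -
    obtain B where B: "\<And>v. v \<in> P i \<Longrightarrow> J i u0 (x(i := v)) \<le> B"
      using bdd_v[OF g i x u0] by (auto simp: bdd_above_def)
    show ?thesis unfolding bdd_above_def
    proof (intro exI ballI)
      fix y assume "y \<in> (\<lambda>v. INF w\<in>P 0. J i w (x(i := v))) ` P i"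
      then obtain v where v: "v \<in> P i" and y: "y = (INF w\<in>P 0. J i w (x(i := v)))" by auto
      have "y \<le> J i u0 (x(i := v))" unfolding y
        by (rule cINF_lower[OF bdd_w(1)[OF g _ upd_prof[OF x i v]] u0]) (use i in auto)
      thus "y \<le> B" using B[OF v] by simp
    qed
  qed
qed


lemma part1:
  assumes g: "game n P J" and a: "\<alpha> \<in> incentive n P" and u: "u \<in> NE n P J \<alpha>"
  shows "(\<alpha> u, u) \<in> Bset n P J"
proof -
  have up: "u \<in> profiles n P" using u by (simp add: NE_def)
  have au: "\<alpha> u \<in> P 0" using a up by (auto simp: incentive_def)
  have "J i (\<alpha> u) u \<ge> (SUP v\<in>P i. INF w\<in>P 0. J i w (u(i := v)))" if i: "i \<in> {1..n}" for i
  proof (rule cSUP_least)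
    show "P i \<noteq> {}" using g i unfolding game_def by auto
  next
    fix v assume v: "v \<in> P i"
    have xp: "u(i := v) \<in> profiles n P" by (rule upd_prof[OF up i v])
    have "\<alpha> (u(i := v)) \<in> P 0" using a xp by (auto simp: incentive_def)
    hence "(INF w\<in>P 0. J i w (u(i := v))) \<le> J i (\<alpha> (u(i := v))) (u(i := v))"
      by (intro cINF_lower bdd_w(1)[OF g _ xp]) (use i in auto)
    also have "\<dots> \<le> J i (\<alpha> u) u" using u i v by (auto simp: NE_def)
    finally show "(INF w\<in>P 0. J i w (u(i := v))) \<le> J i (\<alpha> u) u" .
  qed
  thus ?thesis using up au by (auto simp: Bset_def)
qed

lemma part2:
  assumes g: "game n P J" and b: "(u0, u) \<in> Bset n P J"
  shows "\<exists>\<alpha> \<in> incentive n P. \<alpha> u = u0 \<and> u \<in> NE n P J \<alpha>"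
proof -
  have up: "u \<in> profiles n P" and u0: "u0 \<in> P 0"
    and bi: "\<And>i. i \<in> {1..n} \<Longrightarrow> J i u0 u \<ge> (SUP v\<in>P i. INF w\<in>P 0. J i w (u(i := v)))"
    using b by (auto simp: Bset_def)
  define c where "c x = (SOME i. i \<in> {1..n} \<and> x i \<noteq> u i)" for x :: "nat \<Rightarrow> 'a"
  define m where "m i x = (SOME w. w \<in> P 0 \<and> (\<forall>w'\<in>P 0. J i w x \<le> J i w' x))" for i x
  define \<alpha> where "\<alpha> x = (if x = u then u0 else m (c x) x)" for x
  have mP: "m i x \<in> P 0 \<and> (\<forall>w'\<in>P 0. J i (m i x) x \<le> J i w' x)"
    if "i \<in> {0..n}" "x \<in> profiles n P" for i x
  proof -
    have "\<exists>w. w \<in> P 0 \<and> (\<forall>w'\<in>P 0. J i w x \<le> J i w' x)" using min_ex[OF g that] by blast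
    from someI_ex[OF this] show ?thesis unfolding m_def .
  qed
  have cP: "c x \<in> {1..n} \<and> x (c x) \<noteq> u (c x)" if xh: "x \<in> profiles n P" "x \<noteq> u" for x
  proof -
    obtain j where "x j \<noteq> u j" using xh(2) by auto
    moreover have "j \<in> {1..n}"
      using calculation xh(1) up unfolding profiles_def by (auto simp: PiE_iff extensional_def) (metis (no_types) atLeastAtMost_iff)+
    ultimately show ?thesis unfolding c_def by (intro someI[of "\<lambda>i. i \<in> {1..n} \<and> x i \<noteq> u i" j]) auto
  qed
  have inc: "\<alpha> \<in> incentive n P"
    unfolding incentive_def
  proof
    fix x assume x: "x \<in> profiles n P"
    show "\<alpha> x \<in> P 0"
    proof (cases "x = u")
      case True thus ?thesis using u0 by (simp add: \<alpha>_def)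
    next
      case False thus ?thesis using cP[OF x False] mP[OF _ x] by (auto simp: \<alpha>_def)
    qed
  qed
  have ne: "u \<in> NE n P J \<alpha>"
    unfolding NE_def
  proof (intro CollectI conjI ballI up)
    fix i v assume i: "i \<in> {1..n}" and v: "v \<in> P i"
    show "J i (\<alpha> (u(i := v))) (u(i := v)) \<le> J i (\<alpha> u) u"
    proof (cases "u(i := v) = u")
      case True thus ?thesis by simp
    next
      case False
      have xp: "u(i := v) \<in> profiles n P" by (rule upd_prof[OF up i v])
      have ci: "c (u(i := v)) = i" using cP[OF xp False] by (auto split: if_splits)
      have al: "\<alpha> (u(i := v)) = m i (u(i := v))" using False ci by (simp add: \<alpha>_def)
      have mm: "m i (u(i := v)) \<in> P 0 \<and> (\<forall>w'\<in>P 0. J i (m i (u(i := v))) (u(i := v)) \<le> J i w' (u(i := v)))"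
        using mP[OF _ xp] i by auto
      have "J i (m i (u(i := v))) (u(i := v)) \<le> (INF w\<in>P 0. J i w (u(i := v)))"
        using mm u0 by (intro cINF_greatest) auto
      also have "\<dots> \<le> (SUP v\<in>P i. INF w\<in>P 0. J i w (u(i := v)))"
        by (rule inf_le_sup[OF g i up v u0])
      also have "\<dots> \<le> J i u0 u" by (rule bi[OF i])
      finally show ?thesis using al by (simp add: \<alpha>_def)
    qed
  qed
  have "\<alpha> u = u0" by (simp add: \<alpha>_def)
  thus ?thesis using inc ne by blast
qed

theorem lemma3:
  fixes n :: nat and P :: "nat \<Rightarrow> 'a::metric_space set"
    and J :: "nat \<Rightarrow> 'a \<Rightarrow> (nat \<Rightarrow> 'a) \<Rightarrow> real"
  assumes "game n P J"
  shows "(\<forall>\<alpha> \<in> incentive n P. \<forall>u \<in> NE n P J \<alpha>. (\<alpha> u, u) \<in> Bset n P J)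
     \<and> (\<forall>u0 u. (u0, u) \<in> Bset n P J \<longrightarrow>
          (\<exists>\<alpha> \<in> incentive n P. \<alpha> u = u0 \<and> u \<in> NE n P J \<alpha>))"
  using part1[OF assms] part2[OF assms] by blast

end
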